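(* Let $3 \le k \le n$ and break the segment $[0,1]$ at $n-1$ independent uniformly random points into $n$ pieces. For every integer $m$ with $0 \le m \le \binom{n}{k}$, the probability that exactly $m$ of the $k$-element subsets of the $n$ pieces can form a $k$-gon is nonzero. Equivalently, $P(k,n,0) > 0$ and $P(k,n,m-1) - P(k,n,m) > 0$ for all $0 < m \le \binom nk$, where $P(k,n,m)$ is the probability that at least $m$ of the $k$-element subsets of pieces can form a $k$-gon.
   Context: A collection of $k$ lengths can form a (nondegenerate) $k$-gon iff each length is less than the sum of the other $k-1$. *)

theory Defs
  imports "HOL-Probability.Probability"
begin

definition break_points_measure :: "nat \<Rightarrow> (nat \<Rightarrow> real) measure" where
  "break_points_measure n = PiM {..<n-1} (\<lambda>_. uniform_measure lborel {0..1::real})"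

definition pieces :: "nat \<Rightarrow> (nat \<Rightarrow> real) \<Rightarrow> nat \<Rightarrow> real" where
  "pieces n x i = (let L = 0 # sort (map x [0..<n-1]) @ [1] in L ! Suc i - L ! i)"

definition forms_polygon :: "(nat \<Rightarrow> real) \<Rightarrow> nat set \<Rightarrow> bool" where
  "forms_polygon len S \<longleftrightarrow> (\<forall>i\<in>S. len i < (\<Sum>j\<in>S - {i}. len j))"

definition num_polygons :: "nat \<Rightarrow> nat \<Rightarrow> (nat \<Rightarrow> real) \<Rightarrow> nat" where
  "num_polygons k n x = card {S. S \<subseteq> {..<n} \<and> card S = k \<and> forms_polygon (pieces n x) S}"

end

theory Submission
  imports Defs "HOL-Library.Nat_Bijection"
begin


lemma sorted_nth_le_iff:
  fixes ys :: "real list"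
  assumes "sorted ys" "j < length ys"
  shows "(ys ! j \<le> t) \<longleftrightarrow> j < card {i. i < length ys \<and> ys ! i \<le> t}"
proof
  assume h: "ys ! j \<le> t"
  have "i \<in> {i. i < length ys \<and> ys ! i \<le> t}" if "i \<in> {..j}" for i
  proof -
    have "ys ! i \<le> ys ! j" using sorted_nth_mono[OF assms(1), of i j] that assms(2) by simp
    then show ?thesis using h that assms(2) by simp
  qed
  then have "{..j} \<subseteq> {i. i < length ys \<and> ys ! i \<le> t}" by blast
  from card_mono[OF _ this] show "j < card {i. i < length ys \<and> ys ! i \<le> t}" by simp
next
  assume h: "j < card {i. i < length ys \<and> ys ! i \<le> t}"
  show "ys ! j \<le> t"
  proof (rule ccontr)
    assume nj: "\<not> ys ! j \<le> t"
    have "i < j" if "i < length ys" "ys ! i \<le> t" for i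
    proof (rule ccontr)
      assume "\<not> i < j"
      then have "ys ! j \<le> ys ! i" using sorted_nth_mono[OF assms(1), of j i] that by simp
      then show False using nj that by simp
    qed
    then have "{i. i < length ys \<and> ys ! i \<le> t} \<subseteq> {..<j}" by blast
    from card_mono[OF _ this] h show False by simp
  qed
qed

lemma sort_nth_le_iff:
  fixes xs :: "real list"
  assumes "j < length xs"
  shows "(sort xs ! j \<le> t) \<longleftrightarrow> j < length (filter (\<lambda>v. v \<le> t) xs)"
proof -
  have "mset (filter (\<lambda>v. v \<le> t) xs) = mset (filter (\<lambda>v. v \<le> t) (sort xs))"
    by (simp add: mset_filter)
  then have "length (filter (\<lambda>v. v \<le> t) xs) = length (filter (\<lambda>v. v \<le> t) (sort xs))"
    using arg_cong[of _ _ size] by (metis size_mset)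
  also have "\<dots> = card {i. i < length (sort xs) \<and> sort xs ! i \<le> t}"
    by (simp add: length_filter_conv_card)
  finally show ?thesis using sorted_nth_le_iff[of "sort xs" j t] assms by simp
qed

lemma card_filter_map:
  "length (filter P (map x [0..<N])) = card {r. r < N \<and> P (x r)}"
  by (simp add: length_filter_conv_card cong: conj_cong)

lemma meas_sort_nth:
  fixes M :: "nat \<Rightarrow> real measure"
  assumes "j < N" and sM: "\<And>i. sets (M i) = sets borel"
  shows "(\<lambda>x. sort (map x [0..<N]) ! j) \<in> borel_measurable (PiM {..<N} M)"
unfolding borel_measurable_iff_le proof
  fix t :: real
  have c: "(\<Sum>r<N. indicator {..t} (x r) :: real) = real (card {r. r<N \<and> x r \<le> t})" for x :: "nat \<Rightarrow> real"
  proof -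
    have "(\<Sum>r<N. indicator {..t} (x r) :: real) = (\<Sum>r\<in>{r. r<N \<and> x r \<le> t}. 1)"
      by (rule sum.mono_neutral_cong_right) (auto simp: indicator_def)
    then show ?thesis by simp
  qed
  have eq: "{x \<in> space (PiM {..<N} M). sort (map x [0..<N]) ! j \<le> t}
      = {x \<in> space (PiM {..<N} M). real j < (\<Sum>r<N. indicator {..t} (x r))}"
  proof -
    have "(sort (map x [0..<N]) ! j \<le> t) = (j < card {r. r<N \<and> x r \<le> t})" for x :: "nat \<Rightarrow> real"
    proof -
      have "(sort (map x [0..<N]) ! j \<le> t) = (j < length (filter (\<lambda>v. v \<le> t) (map x [0..<N])))"
        by (rule sort_nth_le_iff) (simp add: assms)
      also have "\<dots> = (j < card {r. r<N \<and> x r \<le> t})" unfolding card_filter_map ..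
      finally show ?thesis .
    qed
    then show ?thesis unfolding c by simp
  qed
  show "{x \<in> space (PiM {..<N} M). sort (map x [0..<N]) ! j \<le> t} \<in> sets (PiM {..<N} M)"
    unfolding eq
  proof (rule borel_measurable_less)
    show "(\<lambda>x. real j) \<in> borel_measurable (PiM {..<N} M)" by simp
    show "(\<lambda>x. \<Sum>r<N. indicator {..t} (x r) :: real) \<in> borel_measurable (PiM {..<N} M)"
    proof (rule borel_measurable_sum)
      fix r assume r: "r \<in> {..<N}"
      have c1: "(\<lambda>x. x r) \<in> measurable (PiM {..<N} M) borel"
        apply (subst measurable_cong_sets[OF refl sM[symmetric]])
        apply (rule measurable_component_singleton)
        using r by simp
      have c2: "(indicator {..t} :: real \<Rightarrow> real) \<in> borel_measurable borel"
        by (rule borel_measurable_indicator) simp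
      show "(\<lambda>x. indicator {..t} (x r) :: real) \<in> borel_measurable (PiM {..<N} M)"
        using measurable_compose[OF c1 c2] by simp
    qed
  qed
qed

lemma meas_L_nth:
  fixes M :: "nat \<Rightarrow> real measure"
  assumes "j \<le> Suc N" and sM: "\<And>i. sets (M i) = sets borel"
  shows "(\<lambda>x. (0 # sort (map x [0..<N]) @ [1]) ! j) \<in> borel_measurable (PiM {..<N} M)"
proof (cases j)
  case 0 then show ?thesis by simp
next
  case (Suc j')
  show ?thesis
  proof (cases "j' < N")
    case True
    have e: "(\<lambda>x. (0 # sort (map x [0..<N]) @ [1]) ! j) = (\<lambda>x. sort (map x [0..<N]) ! j')"
      using True by (auto simp: Suc nth_append)
    show ?thesis unfolding e by (rule meas_sort_nth[OF True]) (rule sM)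
  next
    case False
    then have "j' = N" using assms Suc by simp
    then have e: "(\<lambda>x. (0 # sort (map x [0..<N]) @ [1]) ! j) = (\<lambda>x. 1)"
      by (auto simp: Suc nth_append)
    show ?thesis unfolding e by simp
  qed
qed

lemma meas_pieces:
  assumes "i < n"
  shows "(\<lambda>x. pieces n x i) \<in> borel_measurable (break_points_measure n)"
proof -
  have sM: "\<And>j. sets ((\<lambda>_. uniform_measure lborel {0..1::real}) j) = sets borel" by simp
  have m1: "(\<lambda>x. (0 # sort (map x [0..<n-1]) @ [1]) ! Suc i) \<in> borel_measurable (PiM {..<n-1} (\<lambda>_. uniform_measure lborel {0..1::real}))"
    by (rule meas_L_nth[OF _ sM]) (use assms in linarith)
  have m2: "(\<lambda>x. (0 # sort (map x [0..<n-1]) @ [1]) ! i) \<in> borel_measurable (PiM {..<n-1} (\<lambda>_. uniform_measure lborel {0..1::real}))"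
    by (rule meas_L_nth[OF _ sM]) (use assms in linarith)
  have e: "(\<lambda>x. pieces n x i) = (\<lambda>x. (0 # sort (map x [0..<n-1]) @ [1]) ! Suc i - (0 # sort (map x [0..<n-1]) @ [1]) ! i)"
    by (simp only: pieces_def Let_def)
  show ?thesis unfolding e break_points_measure_def by (rule borel_measurable_diff[OF m1 m2])
qed

lemma meas_forms:
  assumes "S \<subseteq> {..<n}"
  shows "Measurable.pred (break_points_measure n) (\<lambda>x. forms_polygon (pieces n x) S)"
proof -
  have fin: "finite S" using assms finite_subset by blast
  have pm: "\<And>i. i \<in> S \<Longrightarrow> (\<lambda>x. pieces n x i) \<in> borel_measurable (break_points_measure n)"
    using assms meas_pieces by blast
  show ?thesis unfolding forms_polygon_def
    apply (rule pred_intros_finite(3)[OF fin])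
    apply (unfold Measurable.pred_def)
    apply (rule borel_measurable_less)
     apply (simp add: pm)
    apply (rule borel_measurable_sum)
    using pm by auto
qed

lemma num_polygons_sum:
  "num_polygons k n x = (\<Sum>S\<in>{S. S \<subseteq> {..<n} \<and> card S = k}. if forms_polygon (pieces n x) S then 1 else 0)"
proof -
  have fin: "finite {S. S \<subseteq> {..<n} \<and> card S = k}" by simp
  have "(\<Sum>S\<in>{S. S \<subseteq> {..<n} \<and> card S = k}. if forms_polygon (pieces n x) S then 1 else 0)
      = (\<Sum>S\<in>{S \<in> {S. S \<subseteq> {..<n} \<and> card S = k}. forms_polygon (pieces n x) S}. 1::nat)"
    by (rule sum.inter_filter[OF fin, symmetric])
  also have "\<dots> = card {S \<in> {S. S \<subseteq> {..<n} \<and> card S = k}. forms_polygon (pieces n x) S}"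
    by (rule card_eq_sum[symmetric])
  also have "{S \<in> {S. S \<subseteq> {..<n} \<and> card S = k}. forms_polygon (pieces n x) S}
      = {S. S \<subseteq> {..<n} \<and> card S = k \<and> forms_polygon (pieces n x) S}" by blast
  finally show ?thesis unfolding num_polygons_def by simp
qed

lemma meas_num:
  "{x \<in> space (break_points_measure n). num_polygons k n x = m} \<in> sets (break_points_measure n)"
proof -
  have mm: "(\<lambda>x. num_polygons k n x) \<in> measurable (break_points_measure n) (count_space UNIV)"
  proof -
    have ps: "{x\<in>space (break_points_measure n). forms_polygon (pieces n x) S} \<in> sets (break_points_measure n)"
      if "S \<in> {S. S \<subseteq> {..<n} \<and> card S = k}" for S
      using meas_forms[of S n] that unfolding Measurable.pred_def by simp
    show ?thesis
      unfolding num_polygons_sum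
      apply (rule measurable_sum_nat)
      apply (rule measurable_If)
        apply (rule measurable_const, simp)
       apply (rule measurable_const, simp)
      by (rule ps)
  qed
  have "Measurable.pred (break_points_measure n) (\<lambda>x. num_polygons k n x = m)"
    using pred_count_space_const1[OF mm, of m] by simp
  then show ?thesis by (simp add: Measurable.pred_def)
qed



lemma prob_unif: "prob_space (uniform_measure lborel {0..1::real})"
  by (rule prob_space_uniform_measure) auto

lemma prob_bpm: "prob_space (break_points_measure n)"
  unfolding break_points_measure_def by (rule prob_space_PiM) (rule prob_unif)

lemma box_pos:
  fixes N :: nat
  assumes "\<And>i. i < N \<Longrightarrow> 0 \<le> a i \<and> a i < b i \<and> b i \<le> (1::real)"
  shows "measure (PiM {..<N} (\<lambda>_. uniform_measure lborel {0..1::real})) (PiE {..<N} (\<lambda>i. {a i..b i})) > 0"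
proof -
  let ?M = "PiM {..<N} (\<lambda>_. uniform_measure lborel {0..1::real})"
  interpret prob_space ?M by (rule prob_space_PiM) (rule prob_unif)
  have "emeasure ?M (prod_emb {..<N} (\<lambda>_. uniform_measure lborel {0..1::real}) {..<N} (PiE {..<N} (\<lambda>i. {a i..b i})))
      = (\<Prod>i<N. emeasure (uniform_measure lborel {0..1::real}) {a i..b i})"
    by (rule emeasure_PiM_emb) (auto intro: prob_unif)
  also have "\<dots> = (\<Prod>i<N. ennreal (b i - a i))"
  proof (rule prod.cong[OF refl])
    fix i assume "i \<in> {..<N}"
    with assms[of i] have "{0..1::real} \<inter> {a i..b i} = {a i..b i}" by auto
    with assms[of i] \<open>i \<in> {..<N}\<close> show "emeasure (uniform_measure lborel {0..1::real}) {a i..b i} = ennreal (b i - a i)"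
      by (simp add: divide_ennreal_def)
  qed
  also have "\<dots> = ennreal (\<Prod>i<N. b i - a i)"
  proof -
    have h: "0 \<le> b i - a i" if "i \<in> {..<N}" for i using assms[of i] that by simp
    show ?thesis by (rule prod_ennreal[OF h])
  qed
  finally have e: "emeasure ?M (PiE {..<N} (\<lambda>i. {a i..b i})) = ennreal (\<Prod>i<N. b i - a i)"
    by simp
  have "(\<Prod>i<N. b i - a i) > 0" using assms by (intro prod_pos) auto
  then show ?thesis using e by (simp add: measure_def)
qed

lemma box_sets:
  fixes N :: nat
  shows   "PiE {..<N} (\<lambda>i. {a i..b i::real}) \<in> sets (PiM {..<N} (\<lambda>_. uniform_measure lborel {0..1::real}))"
  by (rule sets_PiM_I_finite) auto



lemma psum_step:
  fixes l :: "nat \<Rightarrow> int"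
  assumes "i < j" "j \<le> n" "\<And>i. i < n \<Longrightarrow> 1 \<le> l i"
  shows "sum l {..<i} + 1 \<le> sum l {..<j}"
proof -
  have "sum l {..<j} = sum l {..<i} + sum l {i..<j}"
    using assms(1) by (simp add: lessThan_atLeast0 sum.atLeastLessThan_concat)
  moreover have "l i \<le> sum l {i..<j}"
    using assms by (intro member_le_sum) (auto intro: order.trans[OF zero_le_one])
  ultimately show ?thesis using assms(3)[of i] assms(1,2) by simp
qed

lemma err_sum:
  fixes p :: "nat \<Rightarrow> real" and l :: "nat \<Rightarrow> int" and T d :: real
  assumes fin: "finite S" and i: "i \<in> S" and e: "\<And>j. j \<in> S \<Longrightarrow> \<bar>p j - l j / T\<bar> \<le> 2*d"
  shows "\<bar>(2 * p i - sum p S) - real_of_int (2 * l i - sum l S) / T\<bar> \<le> (2 * card S + 4) * d"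
proof -
  define e where "e j = p j - l j / T" for j
  have ps: "sum p S = sum l S / T + sum e S"
    by (simp add: e_def sum.distrib sum_subtractf sum_divide_distrib)
  have "\<bar>sum e S\<bar> \<le> sum (\<lambda>j. \<bar>e j\<bar>) S" by (rule sum_abs)
  also have "\<dots> \<le> sum (\<lambda>j. 2*d) S" using e by (intro sum_mono) (simp add: e_def)
  also have "\<dots> = card S * (2*d)" by simp
  finally have se: "\<bar>sum e S\<bar> \<le> card S * (2*d)" .
  have ei: "\<bar>e i\<bar> \<le> 2*d" using e i by (simp add: e_def)
  have "(2 * p i - sum p S) - real_of_int (2 * l i - sum l S) / T = 2 * e i - sum e S"
    unfolding ps by (simp add: e_def diff_divide_distrib)
  then have "\<bar>(2 * p i - sum p S) - real_of_int (2 * l i - sum l S) / T\<bar> \<le> 2*\<bar>e i\<bar> + \<bar>sum e S\<bar>"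
    by simp
  also have "\<dots> \<le> (2 * card S + 4) * d" using ei se by (simp add: algebra_simps)
  finally show ?thesis .
qed

lemma forms_iff2:
  assumes "finite S"
  shows "forms_polygon p S \<longleftrightarrow> (\<forall>i\<in>S. 2 * p i < sum p S)"
  unfolding forms_polygon_def using assms by (auto simp: sum_diff1)



lemma lemmaB:
  fixes l :: "nat \<Rightarrow> int" and n k :: nat
  assumes n: "2 \<le> n" and pos: "\<And>i. i < n \<Longrightarrow> 1 \<le> l i"
    and gen: "\<And>S. S \<subseteq> {..<n} \<Longrightarrow> card S = k \<Longrightarrow>
        (\<forall>i\<in>S. 2 * l i < sum l S) \<or> (\<exists>i\<in>S. 2 * l i > sum l S)"
  shows "measure (break_points_measure n)
     {x \<in> space (break_points_measure n). num_polygons k n x =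
        card {S. S \<subseteq> {..<n} \<and> card S = k \<and> (\<forall>i\<in>S. 2 * l i < sum l S)}} > 0"
proof -
  define N where "N = n - 1"
  have nN: "n = Suc N" using n by (simp add: N_def)
  define T where "T = real_of_int (sum l {..<n})"
  define P where "P j = real_of_int (sum l {..<j}) / T" for j
  define d where "d = 1 / ((2*k+5) * T)"
  define c where "c i = P (Suc i)" for i
  define Box where "Box = PiE {..<N} (\<lambda>i. {c i - d .. c i + d})"
  have T1: "T \<ge> 1"
  proof -
    have "sum l {..<0} + 1 \<le> sum l {..<n}" by (rule psum_step[OF _ order.refl pos]) (use n in auto)
    then have "1 \<le> sum l {..<n}" by simp
    then have "real_of_int 1 \<le> real_of_int (sum l {..<n})" by (simp only: of_int_le_iff)
    then show ?thesis unfolding T_def by simp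
  qed
  have Pstep: "P j - P i \<ge> 1 / T" if "i < j" "j \<le> n" for i j
  proof -
    have "sum l {..<i} + 1 \<le> sum l {..<j}"
      by (rule psum_step[of i j n l]) (use that pos in auto)
    then have "real_of_int (sum l {..<i} + 1) \<le> real_of_int (sum l {..<j})" by (simp only: of_int_le_iff)
    then have "real_of_int (sum l {..<i}) + 1 \<le> real_of_int (sum l {..<j})" by (simp only: of_int_add of_int_1)
    then have "(real_of_int (sum l {..<j}) - real_of_int (sum l {..<i})) / T \<ge> 1 / T"
      using T1 by (intro divide_right_mono) auto
    then show ?thesis by (simp add: P_def diff_divide_distrib)
  qed
  have P0: "P 0 = 0" by (simp add: P_def)
  have Pn: "P n = 1" using T1 by (simp add: P_def T_def)
  have Pl: "P (Suc i) - P i = l i / T" for i by (simp add: P_def add_divide_distrib)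
  have dpos: "d > 0" using T1 by (simp add: d_def)
  have dT: "(2 * k + 4) * d < 1 / T"
  proof -
    have "(2 * k + 4) * d = ((2*k+4) / (2*k+5)) * (1/T)" by (simp add: d_def)
    also have "\<dots> < 1 * (1/T)" using T1 by (intro mult_strict_right_mono) auto
    finally show ?thesis by simp
  qed
  have "2 * d \<le> (2 * k + 4) * d" using dpos by (intro mult_right_mono) auto
  then have d2: "2 * d < 1 / T" using dT by linarith
  have boxunit: "0 \<le> c i - d \<and> c i - d < c i + d \<and> c i + d \<le> 1" if "i < N" for i
  proof -
    have "P (Suc i) - P 0 \<ge> 1/T" by (rule Pstep) (use that nN in auto)
    moreover have "P n - P (Suc i) \<ge> 1/T" by (rule Pstep) (use that nN in auto)
    ultimately show ?thesis unfolding c_def using d2 dpos P0 Pn by (intro conjI; linarith)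
  qed
  have sub: "Box \<subseteq> {x \<in> space (break_points_measure n). num_polygons k n x =
        card {S. S \<subseteq> {..<n} \<and> card S = k \<and> (\<forall>i\<in>S. 2 * l i < sum l S)}}"
  proof
    fix x assume xB: "x \<in> Box"
    have xb: "c i - d \<le> x i \<and> x i \<le> c i + d" if "i < N" for i
      using xB that by (auto simp: Box_def PiE_iff)
    have "Box \<subseteq> space (break_points_measure n)"
      unfolding Box_def break_points_measure_def space_PiM N_def by (rule PiE_mono) simp
    then have sp: "x \<in> space (break_points_measure n)" using xB by blast
    have srt: "sorted (map x [0..<N])"
    proof (subst sorted_iff_nth_mono, intro allI impI)
      fix i j assume ij: "i \<le> j" "j < length (map x [0..<N])"
      show "map x [0..<N] ! i \<le> map x [0..<N] ! j"
      proof (cases "i = j")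
        case False
        then have "c j - c i \<ge> 1 / T" unfolding c_def using ij nN by (intro Pstep) auto
        have ijN: "i < N" "j < N" using ij by auto
        have "x i \<le> x j" using xb[OF ijN(1)] xb[OF ijN(2)] \<open>c j - c i \<ge> 1 / T\<close> d2 by linarith
        then show ?thesis using ijN by simp
      qed simp
    qed
    define y where "y = (0 # map x [0..<N] @ [1])"
    have ysort: "(0 # sort (map x [0..<N]) @ [1]) = y"
      using srt by (simp add: y_def sorted_sort_id)
    have yP: "\<bar>y ! j - P j\<bar> \<le> d" if "j \<le> n" for j
    proof (cases j)
      case 0 then show ?thesis using P0 dpos by (simp add: y_def)
    next
      case (Suc j')
      show ?thesis
      proof (cases "j' < N")
        case True
        then have "y ! j = x j'" by (simp add: y_def Suc nth_append)
        then show ?thesis using xb[OF True] by (simp add: c_def Suc abs_le_iff)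
      next
        case False
        then have "j' = N" using that Suc nN by simp
        then have "y ! j = 1" "j = n" by (simp_all add: y_def Suc nth_append nN)
        then show ?thesis using Pn dpos by simp
      qed
    qed
    have pe: "\<bar>pieces n x i - l i / T\<bar> \<le> 2 * d" if "i < n" for i
    proof -
      have "pieces n x i = y ! Suc i - y ! i"
        unfolding pieces_def Let_def ysort[unfolded N_def] by (rule refl)
      then have "pieces n x i - l i / T = (y ! Suc i - P (Suc i)) - (y ! i - P i)"
        using Pl[of i] by simp
      then show ?thesis using yP[of i] yP[of "Suc i"] that by simp
    qed
    have eqS: "forms_polygon (pieces n x) S \<longleftrightarrow> (\<forall>i\<in>S. 2 * l i < sum l S)"
      if S: "S \<subseteq> {..<n}" "card S = k" for S
    proof -
      have fin: "finite S" using S finite_subset by blast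
      have close: "\<bar>(2 * pieces n x i - sum (pieces n x) S) - real_of_int (2 * l i - sum l S) / T\<bar> < 1 / T"
        if "i \<in> S" for i
      proof -
        have "\<bar>(2 * pieces n x i - sum (pieces n x) S) - real_of_int (2 * l i - sum l S) / T\<bar>
            \<le> (2 * card S + 4) * d"
          by (rule err_sum[OF fin that]) (use pe S in auto)
        also have "\<dots> < 1 / T" using dT S by simp
        finally show ?thesis .
      qed
      show ?thesis
      proof (cases "\<forall>i\<in>S. 2 * l i < sum l S")
        case True
        have "2 * pieces n x i < sum (pieces n x) S" if "i \<in> S" for i
        proof -
          have "2 * l i - sum l S \<le> -1" using bspec[OF True that] by simp
          then have "real_of_int (2 * l i - sum l S) \<le> real_of_int (-1)" by (simp only: of_int_le_iff)
          then have "real_of_int (2 * l i - sum l S) \<le> -1" by simp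
          then have "real_of_int (2 * l i - sum l S) / T \<le> -1 / T"
            using T1 by (intro divide_right_mono) auto
          then show ?thesis using close[OF that] by simp
        qed
        then show ?thesis using True fin by (simp add: forms_iff2)
      next
        case False
        then obtain i where i: "i \<in> S" "2 * l i > sum l S" using gen[OF S] by auto
        have "2 * l i - sum l S \<ge> 1" using i by simp
        then have "real_of_int (2 * l i - sum l S) \<ge> real_of_int 1" by (simp only: of_int_le_iff)
        then have "real_of_int (2 * l i - sum l S) \<ge> 1" by simp
        then have "real_of_int (2 * l i - sum l S) / T \<ge> 1 / T"
          using T1 by (intro divide_right_mono) auto
        then have "\<not> 2 * pieces n x i < sum (pieces n x) S" using close[OF i(1)] by simp
        then show ?thesis using False fin i by (auto simp: forms_iff2)
      qed
    qed
    have "num_polygons k n x = card {S. S \<subseteq> {..<n} \<and> card S = k \<and> (\<forall>i\<in>S. 2 * l i < sum l S)}"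
      unfolding num_polygons_def using eqS by (intro arg_cong[where f=card] Collect_cong) auto
    then show "x \<in> {x \<in> space (break_points_measure n). num_polygons k n x =
        card {S. S \<subseteq> {..<n} \<and> card S = k \<and> (\<forall>i\<in>S. 2 * l i < sum l S)}}"
      using sp by simp
  qed
  have ms: "{x \<in> space (break_points_measure n). num_polygons k n x =
        card {S. S \<subseteq> {..<n} \<and> card S = k \<and> (\<forall>i\<in>S. 2 * l i < sum l S)}} \<in> sets (break_points_measure n)"
    by (rule meas_num)
  have fm: "finite_measure (break_points_measure n)"
    using prob_bpm[of n] by (simp add: prob_space_def)
  have "0 < measure (break_points_measure n) Box"
    unfolding Box_def break_points_measure_def N_def[symmetric]
    by (rule box_pos) (rule boxunit)
  also have "\<dots> \<le> measure (break_points_measure n) {x \<in> space (break_points_measure n). num_polygons k n x =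
        card {S. S \<subseteq> {..<n} \<and> card S = k \<and> (\<forall>i\<in>S. 2 * l i < sum l S)}}"
    by (rule finite_measure.finite_measure_mono[OF fm sub ms])
  finally show ?thesis .
qed



lemma threshold_exists:
  fixes A :: "nat set set"
  assumes finA: "finite A" and fin: "\<And>T. T \<in> A \<Longrightarrow> finite T" and j: "j \<le> card A"
  shows "\<exists>t0. card {T\<in>A. t0 \<le> set_encode T} = j"
proof -
  define f where "f i = - int (card {T\<in>A. i \<le> set_encode T})" for i
  define M where "M = Suc (Max (set_encode ` A \<union> {0}))"
  have step: "\<bar>f (i + 1) - f i\<bar> \<le> 1" for i
  proof -
    have u: "{T\<in>A. i \<le> set_encode T} = {T\<in>A. Suc i \<le> set_encode T} \<union> {T\<in>A. set_encode T = i}"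
      by auto
    have c: "card {T\<in>A. i \<le> set_encode T} = card {T\<in>A. Suc i \<le> set_encode T} + card {T\<in>A. set_encode T = i}"
      unfolding u by (rule card_Un_disjoint) (use finA in auto)
    have "card {T\<in>A. set_encode T = i} \<le> Suc 0"
    proof (subst card_le_Suc0_iff_eq)
      show "finite {T \<in> A. set_encode T = i}" using finA by simp
      show "\<forall>a1\<in>{T \<in> A. set_encode T = i}. \<forall>a2\<in>{T \<in> A. set_encode T = i}. a1 = a2"
        using fin set_encode_eq by auto
    qed
    then show ?thesis unfolding f_def using c by simp
  qed
  have f0: "f 0 \<le> - int j" unfolding f_def using j by simp
  have fM: "- int j \<le> f M"
  proof -
    have e: "{T\<in>A. M \<le> set_encode T} = {}"
    proof -
      have "set_encode T < M" if "T \<in> A" for T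
      proof -
        have "set_encode T \<le> Max (set_encode ` A \<union> {0})"
          by (rule Max_ge) (use finA that in auto)
        then show ?thesis unfolding M_def by simp
      qed
      then show ?thesis by force
    qed
    show ?thesis unfolding f_def e by simp
  qed
  obtain i where "f i = - int j" using nat0_intermed_int_val[of M f "- int j"] step f0 fM by auto
  then show ?thesis unfolding f_def by auto
qed

lemma choose_q:
  fixes k n m :: nat
  assumes k: "1 \<le> k" and n: "0 < n" and m: "m \<le> n choose k"
  shows "\<exists>q<n. q choose k \<le> m \<and> m \<le> (q choose k) + (q choose (k-1))"
proof -
  define Q where "Q = {p. p < n \<and> p choose k \<le> m}"
  have fQ: "finite Q" unfolding Q_def by simp
  have "0 \<in> Q" using k n by (simp add: Q_def binomial_eq_0)
  define q where "q = Max Q"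
  have qQ: "q \<in> Q" unfolding q_def using fQ \<open>0 \<in> Q\<close> by (intro Max_in) auto
  have rec: "Suc q choose k = (q choose (k-1)) + (q choose k)"
  proof -
    obtain k' where "k = Suc k'" using k by (cases k) auto
    then show ?thesis by simp
  qed
  have "m \<le> Suc q choose k"
  proof (cases "Suc q < n")
    case True
    have "Suc q \<notin> Q"
    proof
      assume "Suc q \<in> Q"
      then have "Suc q \<le> q" unfolding q_def using fQ by (intro Max_ge) auto
      then show False by simp
    qed
    then show ?thesis using True by (simp add: Q_def)
  next
    case False
    then have "Suc q = n" using qQ by (simp add: Q_def)
    then show ?thesis using m by simp
  qed
  then show ?thesis using qQ rec by (auto simp: Q_def)
qed

lemma lemmaA:
  fixes k n m :: nat
  assumes k3: "3 \<le> k" and kn: "k \<le> n" and m: "m \<le> n choose k"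
  shows "\<exists>l::nat \<Rightarrow> int. (\<forall>i<n. 1 \<le> l i) \<and>
     (\<forall>S. S \<subseteq> {..<n} \<and> card S = k \<longrightarrow> (\<forall>i\<in>S. 2 * l i < sum l S) \<or> (\<exists>i\<in>S. 2 * l i > sum l S)) \<and>
     card {S. S \<subseteq> {..<n} \<and> card S = k \<and> (\<forall>i\<in>S. 2 * l i < sum l S)} = m"
proof -
  obtain q where q: "q < n" "q choose k \<le> m" "m \<le> (q choose k) + (q choose (k-1))"
    using choose_q[of k n m] k3 kn m by auto
  define A where "A = {T. T \<subseteq> {..<q} \<and> card T = k - 1}"
  have cardA: "card A = q choose (k-1)" unfolding A_def using n_subsets[of "{..<q}" "k-1"] by simp
  have finA: "finite A" unfolding A_def by (rule finite_subset[of _ "Pow {..<q}"]) auto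
  have finT: "finite T" if "T \<in> A" for T using that unfolding A_def by (auto intro: finite_subset)
  obtain t0 where t0: "card {T\<in>A. t0 \<le> set_encode T} = m - (q choose k)"
  proof -
    have "m - (q choose k) \<le> card A" unfolding cardA using q(3) by arith
    then show ?thesis using threshold_exists[OF finA finT, of "m - (q choose k)"] that by blast
  qed
  define B :: int where "B = 2^(q+1)"
  define L :: int where "L = 2*(int k - 1)*B + 2*int t0 - 1"
  define W :: int where "W = (\<Sum>i<q. 2*B + 2*2^i) + L"
  define l :: "nat \<Rightarrow> int" where "l i = (if i < q then 2*B + 2*2^i else if i = q then L else (W+1)*2^i)" for i
  have B2: "B \<ge> 2" unfolding B_def
  proof -
    have "(2::int)^1 \<le> 2^(q+1)" by (rule power_increasing) auto
    then show "2 \<le> (2::int)^(q+1)" by simp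
  qed
  have pw: "4 * (2::int)^i < 2 * B" if "i < q" for i
  proof -
    have "(2::int)^i < 2^q" using that by (rule power_strict_increasing) auto
    then show ?thesis unfolding B_def by simp
  qed
  have Lge: "L \<ge> 4 * B - 1"
  proof -
    have "2*(int k - 1)*B \<ge> 2*2*B" using k3 B2 by (intro mult_right_mono mult_left_mono) auto
    then show ?thesis unfolding L_def by simp
  qed
  have lsmall: "2*B \<le> l i \<and> 2 * l i < 6*B" if "i < q" for i
    using pw[OF that] that by (simp add: l_def)
  have Wnn: "W \<ge> 0"
  proof -
    have "(\<Sum>i<q. 2*B + 2*2^i) \<ge> 0" using B2 by (intro sum_nonneg) auto
    then show ?thesis using Lge B2 unfolding W_def by simp
  qed
  have lpos: "1 \<le> l i" for i
  proof -
    have "(1::int) \<le> 2^i" by simp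
    have "1 * 1 \<le> (W+1) * 2^i" using Wnn by (intro mult_mono) auto
    show ?thesis
    proof (cases "i < q")
      case True then show ?thesis using lsmall[OF True] B2 by linarith
    next
      case False then show ?thesis using Lge B2 \<open>1 * 1 \<le> (W+1) * 2^i\<close> by (auto simp: l_def)
    qed
  qed
  have sumq: "sum l {..<Suc q} = W"
  proof -
    have "sum l {..<q} = (\<Sum>i<q. 2*B + 2*2^i)" by (rule sum.cong) (auto simp: l_def)
    then show ?thesis by (simp add: W_def l_def)
  qed
  have hb: "q < h \<Longrightarrow> sum l {..<h} \<le> (W+1)*2^h - 1" for h
  proof (induction h)
    case 0 then show ?case by simp
  next
    case (Suc h)
    show ?case
    proof (cases "h = q")
      case True
      have p1: "(1::int) \<le> 2^Suc q" by (rule one_le_power) simp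
      have "(W+1) * 1 \<le> (W+1) * 2^Suc q" by (rule mult_left_mono[OF p1]) (use Wnn in linarith)
      then show ?thesis using sumq True by simp
    next
      case False
      then have "q < h" using Suc.prems by simp
      then have "sum l {..<h} \<le> (W+1)*2^h - 1" by (rule Suc.IH)
      moreover have "l h = (W+1)*2^h" using \<open>q < h\<close> by (simp add: l_def)
      ultimately show ?thesis by simp
    qed
  qed
  have huge: "sum l {..<h} < l h" if "q < h" for h
    using hb[OF that] that by (simp add: l_def)
  have sumT: "sum l T = 2*B*int (card T) + 2*int (set_encode T)" if "T \<subseteq> {..<q}" for T
  proof -
    have fT: "finite T" using that finite_subset by blast
    have "sum l T = (\<Sum>i\<in>T. 2*B + 2*2^i)" by (rule sum.cong) (use that in \<open>auto simp: l_def\<close>)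
    also have "\<dots> = 2*B*int (card T) + 2*(\<Sum>i\<in>T. 2^i)"
      by (simp add: sum.distrib sum_distrib_left)
    also have "(\<Sum>i\<in>T. (2::int)^i) = int (set_encode T)"
      by (simp add: set_encode_def of_nat_sum)
    finally show ?thesis .
  qed
  define Good where "Good = {S. S \<subseteq> {..<q} \<and> card S = k} \<union> insert q ` {T\<in>A. t0 \<le> set_encode T}"
  have cls: "(S \<in> Good \<and> (\<forall>i\<in>S. 2 * l i < sum l S)) \<or> (S \<notin> Good \<and> (\<exists>i\<in>S. 2 * l i > sum l S))"
    if S: "S \<subseteq> {..<n}" "card S = k" for S
  proof -
    have fS: "finite S" using S finite_subset by blast
    have Sne: "S \<noteq> {}" using S k3 by auto
    have Good_sub: "X \<subseteq> {..q}" if "X \<in> Good" for X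
      using that unfolding Good_def A_def by auto
    show ?thesis
    proof (cases "\<exists>h\<in>S. q < h")
      case True
      define h where "h = Max S"
      have hS: "h \<in> S" unfolding h_def using fS Sne by simp
      have qh: "q < h" using True fS unfolding h_def by (auto intro: less_le_trans Max_ge)
      have sub: "S - {h} \<subseteq> {..<h}"
      proof
        fix x assume x: "x \<in> S - {h}"
        then have "x \<le> h" unfolding h_def using fS by (intro Max_ge) auto
        then show "x \<in> {..<h}" using x by auto
      qed
      have "sum l (S - {h}) \<le> sum l {..<h}"
        by (rule sum_mono2) (use sub lpos in \<open>auto intro: order.trans[OF zero_le_one]\<close>)
      also have "\<dots> < l h" by (rule huge[OF qh])
      finally have "sum l S < 2 * l h"
        using sum.remove[OF fS hS, of l] by simp
      moreover have "S \<notin> Good" using Good_sub hS qh by fastforce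
      ultimately show ?thesis using hS by blast
    next
      case False
      then have Sq: "S \<subseteq> {..q}" by auto
      show ?thesis
      proof (cases "q \<in> S")
        case False
        then have Sq': "S \<subseteq> {..<q}" using Sq by (auto simp: order.order_iff_strict)
        have "of_nat (card S) * (2*B) \<le> sum l S"
          by (rule sum_bounded_below) (use Sq' lsmall in auto)
        moreover have "3 * (2*B) \<le> of_nat (card S) * (2*B)"
          by (intro mult_right_mono) (use S k3 B2 in auto)
        ultimately have B6: "6*B \<le> sum l S" by linarith
        have "\<forall>i\<in>S. 2 * l i < sum l S"
        proof
          fix i assume "i \<in> S"
          then have "i < q" using Sq' by auto
          from lsmall[OF this] B6 show "2 * l i < sum l S" by linarith
        qed
        moreover have "S \<in> Good" using Sq' S unfolding Good_def by simp
        ultimately show ?thesis by blast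
      next
        case True
        define T where "T = S - {q}"
        have Tq: "T \<subseteq> {..<q}" using Sq unfolding T_def by (auto simp: order.order_iff_strict)
        have cT: "card T = k - 1" using S True fS unfolding T_def by simp
        have TA: "T \<in> A" using Tq cT unfolding A_def by simp
        have SI: "S = insert q T" using True unfolding T_def by auto
        have lq: "l q = L" by (simp add: l_def)
        have sS: "sum l S = L + sum l T"
          using sum.remove[OF fS True, of l] unfolding T_def lq .
        have ck: "int (card T) = int k - 1" using cT k3 by simp
        have sT: "sum l T = 2*(int k - 1)*B + 2*int (set_encode T)"
          using sumT[OF Tq] unfolding ck by (simp add: algebra_simps)
        have h4: "2*(int k - 1)*B \<ge> 2*2*B" using k3 B2 by (intro mult_right_mono mult_left_mono) auto
        have Lf: "L = 2*(int k - 1)*B + 2*int t0 - 1" by (rule L_def)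
        show ?thesis
        proof (cases "t0 \<le> set_encode T")
          case True
          have "S \<in> Good" unfolding Good_def using SI TA True by blast
          moreover have "\<forall>i\<in>S. 2 * l i < sum l S"
          proof
            fix i assume iS: "i \<in> S"
            show "2 * l i < sum l S"
            proof (cases "i = q")
              case True
              have "int t0 \<le> int (set_encode T)" using \<open>t0 \<le> set_encode T\<close> by simp
              then have "L < sum l T" unfolding Lf sT by linarith
              then show ?thesis unfolding True lq sS by linarith
            next
              case False
              then have "i < q" using iS Sq by (auto simp: order.order_iff_strict)
              have "0 \<le> int (set_encode T)" by simp
              then show ?thesis using lsmall[OF \<open>i < q\<close>] sS sT Lge B2 h4 by linarith
            qed
          qed
          ultimately show ?thesis by blast
        next
          case False
          have "S \<notin> Good"
          proof
            assume "S \<in> Good"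
            then obtain T' where T': "T' \<in> A" "t0 \<le> set_encode T'" "S = insert q T'"
              unfolding Good_def using \<open>q \<in> S\<close> by auto
            have "q \<notin> T'" using T' unfolding A_def by auto
            then have "T' = T" using T'(3) unfolding T_def by auto
            then show False using T' False by simp
          qed
          moreover have "2 * l q > sum l S"
          proof -
            have "int (set_encode T) + 1 \<le> int t0" using False by simp
            then have "L > sum l T" unfolding Lf sT by linarith
            then show ?thesis unfolding lq sS by linarith
          qed
          ultimately show ?thesis using \<open>q \<in> S\<close> by blast
        qed
      qed
    qed
  qed
  have Gsub: "S \<subseteq> {..<n} \<and> card S = k" if SG: "S \<in> Good" for S
  proof -
    have "S \<subseteq> {..q}" using that unfolding Good_def A_def by auto
    then have "S \<subseteq> {..<n}" using q by auto
    moreover have "card S = k"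
    proof (cases "S \<subseteq> {..<q} \<and> card S = k")
      case False
      then obtain T where T: "T \<in> A" "S = insert q T" using SG False unfolding Good_def by blast
      have "q \<notin> T" "finite T" using T unfolding A_def by (auto intro: finite_subset)
      then show ?thesis using T k3 unfolding A_def by simp
    qed simp
    ultimately show ?thesis by simp
  qed
  have eqG: "{S. S \<subseteq> {..<n} \<and> card S = k \<and> (\<forall>i\<in>S. 2 * l i < sum l S)} = Good"
  proof
    show "{S. S \<subseteq> {..<n} \<and> card S = k \<and> (\<forall>i\<in>S. 2 * l i < sum l S)} \<subseteq> Good"
    proof
      fix S assume "S \<in> {S. S \<subseteq> {..<n} \<and> card S = k \<and> (\<forall>i\<in>S. 2 * l i < sum l S)}"
      then have S: "S \<subseteq> {..<n}" "card S = k" "\<forall>i\<in>S. 2 * l i < sum l S" by auto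
      show "S \<in> Good" using cls[OF S(1,2)] S(3) by force
    qed
    show "Good \<subseteq> {S. S \<subseteq> {..<n} \<and> card S = k \<and> (\<forall>i\<in>S. 2 * l i < sum l S)}"
    proof
      fix S assume "S \<in> Good"
      then show "S \<in> {S. S \<subseteq> {..<n} \<and> card S = k \<and> (\<forall>i\<in>S. 2 * l i < sum l S)}"
        using Gsub cls by blast
    qed
  qed
  have cardG: "card Good = m"
  proof -
    have f1: "finite {S. S \<subseteq> {..<q} \<and> card S = k}" by (rule finite_subset[of _ "Pow {..<q}"]) auto
    have f2: "finite (insert q ` {T\<in>A. t0 \<le> set_encode T})" using finA by simp
    have disj: "{S. S \<subseteq> {..<q} \<and> card S = k} \<inter> insert q ` {T\<in>A. t0 \<le> set_encode T} = {}" by auto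
    have c1: "card {S. S \<subseteq> {..<q} \<and> card S = k} = q choose k" using n_subsets[of "{..<q}" k] by simp
    have inj: "inj_on (insert q) {T\<in>A. t0 \<le> set_encode T}"
    proof (rule inj_onI)
      fix X Y assume X: "X \<in> {T\<in>A. t0 \<le> set_encode T}" and Y: "Y \<in> {T\<in>A. t0 \<le> set_encode T}"
        and e: "insert q X = insert q Y"
      have "q \<notin> X" "q \<notin> Y" using X Y unfolding A_def by auto
      then show "X = Y" using e by (metis insert_ident)
    qed
    have c2: "card (insert q ` {T\<in>A. t0 \<le> set_encode T}) = m - (q choose k)"
      using card_image[OF inj] t0 by simp
    show ?thesis unfolding Good_def using card_Un_disjoint[OF f1 f2 disj] c1 c2 q by simp
  qed
  show ?thesis
  proof (intro exI conjI allI impI)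
    show "1 \<le> l i" for i by (rule lpos)
    show "(\<forall>i\<in>S. 2 * l i < sum l S) \<or> (\<exists>i\<in>S. 2 * l i > sum l S)"
      if "S \<subseteq> {..<n} \<and> card S = k" for S using cls[of S] that by blast
    show "card {S. S \<subseteq> {..<n} \<and> card S = k \<and> (\<forall>i\<in>S. 2 * l i < sum l S)} = m"
      using eqG cardG by simp
  qed
qed


theorem mainTheorem8:
  fixes k n m :: nat
  assumes "3 \<le> k" and "k \<le> n" and "m \<le> n choose k"
  shows "measure (break_points_measure n)
           {x \<in> space (break_points_measure n). num_polygons k n x = m} > 0"
proof -
  obtain l :: "nat \<Rightarrow> int" where l1: "\<forall>i<n. 1 \<le> l i"
    and l2: "\<forall>S. S \<subseteq> {..<n} \<and> card S = k \<longrightarrow> (\<forall>i\<in>S. 2 * l i < sum l S) \<or> (\<exists>i\<in>S. 2 * l i > sum l S)"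
    and l3: "card {S. S \<subseteq> {..<n} \<and> card S = k \<and> (\<forall>i\<in>S. 2 * l i < sum l S)} = m"
    using lemmaA[OF assms] by blast
  have n2: "2 \<le> n" using assms by simp
  have "measure (break_points_measure n)
     {x \<in> space (break_points_measure n). num_polygons k n x =
        card {S. S \<subseteq> {..<n} \<and> card S = k \<and> (\<forall>i\<in>S. 2 * l i < sum l S)}} > 0"
    by (rule lemmaB[OF n2]) (use l1 l2 in auto)
  then show ?thesis unfolding l3 .
qed

end
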